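(* Let $W$ be a finite set and $\mathtt{N}=\{N_1,\ldots,N_r\}$ a sequence of subsets of $W$ with $N_1\cup\cdots\cup N_r=W$, and put $m=|W|+r$. Put $M_i=N_i-(N_1\cup\cdots\cup N_{i-1})$, $\mathtt{M}=\{M_1,\ldots,M_r\}$, and $U=\widetilde{M}_2\cup\cdots\cup\widetilde{M}_r$. If $\widetilde{N}_i\cap\widetilde{N}_j\ne\emptyset$ for all $i,j$, then the inclusion $\mathbb{R}\mathcal{Z}_{K(\mathtt{M})_U}\to\mathbb{R}\mathcal{Z}_{K(\mathtt{N})}^{m-1}$ is null homotopic.
   Context: Choose distinct points $a_1,\ldots,a_r\notin W$, $\widetilde{N}_i=N_i\sqcup\{a_i\}$, $\widetilde{M}_i=M_i\sqcup\{a_i\}$, $V=W\sqcup\{a_1,\ldots,a_r\}$ (so $|V|=m$). $K(\mathtt{N})$ (resp. $K(\mathtt{M})$) is the simplicial complex on $V$ whose minimal non-faces are exactly $\widetilde{N}_1,\ldots,\widetilde{N}_r$ (resp. $\widetilde{M}_1,\ldots,\widetilde{M}_r$); since $M_i\subset N_i$, $K(\mathtt{M})\subset K(\mathtt{N})$. $K(\mathtt{M})_U=\{\sigma\in K(\mathtt{M})\mid\sigma\subset U\}$ on vertex set $U$. For a complex $K$ on vertex set $V$, $\mathbb{R}\mathcal{Z}_K=\bigcup_{\sigma\in K}\prod_{v\in V}Y_v$ with $Y_v=CS^0$ (reduced cone, an interval) if $v\in\sigma$ and $Y_v=S^0$ otherwise; its fat wedge filtration is $\mathbb{R}\mathcal{Z}_K^i=\{(x_v)\in\mathbb{R}\mathcal{Z}_K\mid\text{at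 least }|V|-i\text{ coordinates are the basepoint}\}$. The inclusion $\mathbb{R}\mathcal{Z}_{K(\mathtt{M})_U}\to\mathbb{R}\mathcal{Z}_{K(\mathtt{N})}^{m-1}$ puts the basepoint in every coordinate outside $U$. *)

theory Defs
  imports "HOL-Analysis.Analysis"
begin

text \<open>Simplicial complex on vertex set V whose minimal non-faces are the members of F
  (F an antichain of nonempty subsets of V): faces are the subsets of V containing no member of F.\<close>
definition complex_min_nonfaces :: "'a set \<Rightarrow> 'a set set \<Rightarrow> 'a set set" where
  "complex_min_nonfaces V F = {\<sigma>. \<sigma> \<subseteq> V \<and> (\<forall>\<tau>\<in>F. \<not> \<tau> \<subseteq> \<sigma>)}"

definition full_sub :: "'a set set \<Rightarrow> 'a set \<Rightarrow> 'a set set" where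
  "full_sub K U = {\<sigma>\<in>K. \<sigma> \<subseteq> U}"

text \<open>Real moment-angle complex on vertex set V: CS^0 is modelled as [-1,1],
  S^0 as {-1,1}, basepoint 1.  Points are extensional functions V \<rightarrow> real.\<close>
definition RZ :: "'a set \<Rightarrow> 'a set set \<Rightarrow> ('a \<Rightarrow> real) set" where
  "RZ V K = (\<Union>\<sigma>\<in>K. PiE V (\<lambda>v. if v \<in> \<sigma> then {-1..1} else {-1,1}))"

definition RZ_fat :: "'a set \<Rightarrow> 'a set set \<Rightarrow> nat \<Rightarrow> ('a \<Rightarrow> real) set" where
  "RZ_fat V K i = {x \<in> RZ V K. card V - i \<le> card {v\<in>V. x v = 1}}"

definition RZ_top :: "'a set \<Rightarrow> ('a \<Rightarrow> real) set \<Rightarrow> ('a \<Rightarrow> real) topology" where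
  "RZ_top V S = subtopology (product_topology (\<lambda>_. euclideanreal) V) S"

definition incl_base :: "'a set \<Rightarrow> 'a set \<Rightarrow> ('a \<Rightarrow> real) \<Rightarrow> ('a \<Rightarrow> real)" where
  "incl_base U V x = restrict (\<lambda>v. if v \<in> U then x v else 1) V"

definition null_homotopic :: "'a topology \<Rightarrow> 'b topology \<Rightarrow> ('a \<Rightarrow> 'b) \<Rightarrow> bool" where
  "null_homotopic X Y f \<longleftrightarrow> (\<exists>c. homotopic_with (\<lambda>_. True) X Y f (\<lambda>_. c))"

end

theory Submission
  imports Defs
begin

lemma cont_lemma:
  fixes U V :: "'a set" and S T :: "('a \<Rightarrow> real) set"
  assumes "\<And>t x. t \<in> {0..1} \<Longrightarrow> x \<in> S \<Longrightarrow>
     restrict (\<lambda>v. if v \<in> U then (1-t) * x v + t else 1) V \<in> T"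
  shows "continuous_map (prod_topology (top_of_set {0..1::real}) (RZ_top U S)) (RZ_top V T)
     (\<lambda>(t,x). restrict (\<lambda>v. if v \<in> U then (1-t) * x v + t else 1) V)"
  unfolding RZ_top_def
proof (rule continuous_map_into_subtopology)
  have proj: "continuous_map (prod_topology (top_of_set {0..1::real}) (subtopology (product_topology (\<lambda>_. euclideanreal) U) S)) euclideanreal (\<lambda>p. snd p v)" if "v \<in> U" for v
  proof -
    have "continuous_map (subtopology (product_topology (\<lambda>_. euclideanreal) U) S) euclideanreal (\<lambda>x. x v)"
      by (rule continuous_map_from_subtopology) (rule continuous_map_product_projection[OF that])
    then have "continuous_map (prod_topology (top_of_set {0..1::real}) (subtopology (product_topology (\<lambda>_. euclideanreal) U) S)) euclideanreal ((\<lambda>x. x v) \<circ> snd)"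
      by (rule continuous_map_compose[OF continuous_map_snd])
    then show ?thesis by (simp add: o_def)
  qed
  have fstc: "continuous_map (prod_topology (top_of_set {0..1::real}) (subtopology (product_topology (\<lambda>_. euclideanreal) U) S)) euclideanreal fst"
    by (rule continuous_map_into_fulltopology[OF continuous_map_fst])
  show "continuous_map (prod_topology (top_of_set {0..1}) (subtopology (product_topology (\<lambda>_. euclideanreal) U) S))
     (product_topology (\<lambda>_. euclideanreal) V) (\<lambda>(t, x). restrict (\<lambda>v. if v \<in> U then (1 - t) * x v + t else 1) V)"
    unfolding continuous_map_componentwise
  proof (intro conjI ballI)
    fix v assume "v \<in> V"
    show "continuous_map (prod_topology (top_of_set {0..1}) (subtopology (product_topology (\<lambda>_. euclideanreal) U) S))
        euclideanreal (\<lambda>x. (case x of (t, x) \<Rightarrow> restrict (\<lambda>v. if v \<in> U then (1 - t) * x v + t else 1) V) v)"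
    proof (cases "v \<in> U")
      case True
      have "continuous_map (prod_topology (top_of_set {0..1}) (subtopology (product_topology (\<lambda>_. euclideanreal) U) S))
        euclideanreal (\<lambda>p. (1 - fst p) * snd p v + fst p)"
        by (intro continuous_intros proj True fstc)
      then show ?thesis using True \<open>v \<in> V\<close>
        by (simp add: case_prod_beta)
    next
      case False
      then show ?thesis using \<open>v \<in> V\<close> by (simp add: case_prod_beta)
    qed
  next
    show "(\<lambda>(t, x). restrict (\<lambda>v. if v \<in> U then (1 - t) * x v + t else 1) V) `
      topspace (prod_topology (top_of_set {0..1}) (subtopology (product_topology (\<lambda>_. euclideanreal) U) S))
      \<subseteq> extensional V" by auto
  qed
  show "(\<lambda>(t, x). restrict (\<lambda>v. if v \<in> U then (1 - t) * x v + t else 1) V) \<in>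
    topspace (prod_topology (top_of_set {0..1}) (subtopology (product_topology (\<lambda>_. euclideanreal) U) S)) \<rightarrow> T"
    using assms by auto
qed

theorem proposition4p5:
  fixes W :: "'a set" and r :: nat and N :: "nat \<Rightarrow> 'a set" and a :: "nat \<Rightarrow> 'a"
  assumes "finite W"
    and "\<forall>i\<in>{1..r}. N i \<subseteq> W"
    and "(\<Union>i\<in>{1..r}. N i) = W"
    and "inj_on a {1..r}"
    and "\<forall>i\<in>{1..r}. a i \<notin> W"
    and "\<forall>i\<in>{1..r}. \<forall>j\<in>{1..r}. insert (a i) (N i) \<inter> insert (a j) (N j) \<noteq> {}"
  shows "let V = W \<union> a ` {1..r};
             m = card W + r;
             M = (\<lambda>i. N i - (\<Union>j\<in>{1..<i}. N j));
             KN = complex_min_nonfaces V ((\<lambda>i. insert (a i) (N i)) ` {1..r});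
             KM = complex_min_nonfaces V ((\<lambda>i. insert (a i) (M i)) ` {1..r});
             U = (\<Union>i\<in>{2..r}. insert (a i) (M i))
         in null_homotopic (RZ_top U (RZ U (full_sub KM U)))
                           (RZ_top V (RZ_fat V KN (m - 1)))
                           (incl_base U V)"
proof -
  have key: "null_homotopic (RZ_top U (RZ U (full_sub KM U))) (RZ_top V (RZ_fat V KN (m - 1))) (incl_base U V)"
    if V_def: "V = W \<union> a ` {1..r}"
    and m_def: "m = card W + r"
    and M_def: "M = (\<lambda>i. N i - (\<Union>j\<in>{1..<i}. N j))"
    and KN_def: "KN = complex_min_nonfaces V ((\<lambda>i. insert (a i) (N i)) ` {1..r})"
    and KM_def: "KM = complex_min_nonfaces V ((\<lambda>i. insert (a i) (M i)) ` {1..r})"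
    and U_def: "U = (\<Union>i\<in>{2..r}. insert (a i) (M i))"
    for V m M KN KM U
  proof -
  define S where "S = RZ U (full_sub KM U)"
  define T where "T = RZ_fat V KN (m - 1)"
  have finV: "finite V" using assms(1) by (simp add: V_def)
  have cardV: "card V \<le> m" unfolding V_def m_def
  proof -
    have "card (W \<union> a ` {1..r}) \<le> card W + card (a ` {1..r})" by (rule card_Un_le)
    also have "card (a ` {1..r}) \<le> r" using card_image_le[of "{1..r}" a] by simp
    finally show "card (W \<union> a ` {1..r}) \<le> card W + r" by simp
  qed
  have MW: "M i \<subseteq> W" if "i \<in> {1..r}" for i using assms(2) that by (auto simp: M_def)
  have UV: "U \<subseteq> V"
  proof
    fix x assume "x \<in> U"
    then obtain i where i: "i \<in> {2..r}" "x = a i \<or> x \<in> M i" unfolding U_def by auto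
    then have "i \<in> {1..r}" by auto
    then show "x \<in> V" using i MW[of i] unfolding V_def by auto
  qed
  have a1U: "a 1 \<notin> U" if "r \<ge> 1"
  proof
    assume "a 1 \<in> U"
    then obtain j where j: "j \<in> {2..r}" "a 1 = a j \<or> a 1 \<in> M j" unfolding U_def by auto
    have "1 \<in> {1..r}" "j \<in> {1..r}" "j \<noteq> 1" using that j by auto
    then have "a 1 \<noteq> a j" using assms(4) by (metis inj_onD)
    moreover have "a 1 \<notin> M j" using MW[of j] \<open>j \<in> {1..r}\<close> assms(5) \<open>1 \<in> {1..r}\<close> by auto
    ultimately show False using j by auto
  qed
  have UKN: "U \<in> KN"
    unfolding KN_def complex_min_nonfaces_def
  proof (intro CollectI conjI UV ballI)
    fix \<tau> assume "\<tau> \<in> (\<lambda>i. insert (a i) (N i)) ` {1..r}"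
    then obtain i where i: "i \<in> {1..r}" "\<tau> = insert (a i) (N i)" by auto
    show "\<not> \<tau> \<subseteq> U"
    proof (cases "i = 1")
      case True
      then show ?thesis using i a1U by auto
    next
      case False
      have "1 \<in> {1..r}" using i by auto
      have "insert (a i) (N i) \<inter> insert (a 1) (N 1) \<noteq> {}" using assms(6) i \<open>1 \<in> {1..r}\<close> by blast
      moreover have "a i \<noteq> a 1" using assms(4) i \<open>1 \<in> {1..r}\<close> False by (metis inj_onD)
      moreover have "a i \<notin> N 1" "a 1 \<notin> N i"
      proof -
        have "N 1 \<subseteq> W" "N i \<subseteq> W" "a i \<notin> W" "a 1 \<notin> W"
          using assms(2,5) i(1) \<open>1 \<in> {1..r}\<close> by blast+
        then show "a i \<notin> N 1" "a 1 \<notin> N i" by auto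
      qed
      ultimately obtain w where w: "w \<in> N i" "w \<in> N 1" by auto
      have "w \<notin> U"
      proof
        assume "w \<in> U"
        then obtain j where j: "j \<in> {2..r}" "w = a j \<or> w \<in> M j" unfolding U_def by auto
        have "w \<in> W" using w assms(2) i by auto
        then have "w \<noteq> a j" using assms(5) j(1) by auto
        moreover have "w \<notin> M j" using w(2) j(1) by (auto simp: M_def)
        ultimately show False using j by auto
      qed
      then show ?thesis using i w by auto
    qed
  qed
  have inT: "restrict (\<lambda>v. if v \<in> U then (1-t) * x v + t else 1) V \<in> T"
    if t: "t \<in> {0..1}" and x: "x \<in> S" for t x
  proof -
    let ?y = "restrict (\<lambda>v. if v \<in> U then (1-t) * x v + t else 1) V"
    have xr: "x v \<in> {-1..1}" if "v \<in> U" for v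
      using x that unfolding S_def RZ_def by (auto simp: PiE_iff split: if_splits)
    have yr: "(1-t) * x v + t \<in> {-1..1}" if "v \<in> U" for v
    proof -
      have a: "-1 \<le> x v" "x v \<le> 1" using xr[OF that(1)] by auto
      have "(1-t) * (-1) \<le> (1-t) * x v" using a t by (intro mult_left_mono) auto
      moreover have "(1-t) * x v \<le> (1-t) * 1" using a t by (intro mult_left_mono) auto
      ultimately show ?thesis using t by auto
    qed
    have "?y \<in> PiE V (\<lambda>v. if v \<in> U then {-1..1} else {-1,1})"
      using yr by (auto simp: PiE_iff)
    then have RZ: "?y \<in> RZ V KN" unfolding RZ_def using UKN by blast
    have "card V - (m - 1) \<le> card {v\<in>V. ?y v = 1}"
    proof (cases "r = 0")
      case True
      then have "V = {}" using assms(3) by (simp add: V_def)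
      then show ?thesis by simp
    next
      case False
      have "a 1 \<in> V" using False by (auto simp: V_def)
      then have "a 1 \<in> {v\<in>V. ?y v = 1}" using a1U False by auto
      then have "{a 1} \<subseteq> {v\<in>V. ?y v = 1}" by blast
      moreover have "finite {v\<in>V. ?y v = 1}" using finV by simp
      ultimately have "card {a 1} \<le> card {v\<in>V. ?y v = 1}" by (rule card_mono[rotated])
      then have "1 \<le> card {v\<in>V. ?y v = 1}" by simp
      moreover have "m \<ge> 1" using False by (simp add: m_def)
      ultimately show ?thesis using cardV by linarith
    qed
    then show ?thesis using RZ unfolding T_def RZ_fat_def by blast
  qed
  define c where "c = restrict (\<lambda>_. 1::real) V"
  have "homotopic_with (\<lambda>_. True) (RZ_top U S) (RZ_top V T) (incl_base U V) (\<lambda>_. c)"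
    unfolding homotopic_with_def
  proof (intro exI conjI)
    show "continuous_map (prod_topology (top_of_set {0..1::real}) (RZ_top U S)) (RZ_top V T)
     (\<lambda>(t,x). restrict (\<lambda>v. if v \<in> U then (1-t) * x v + t else 1) V)"
      by (rule cont_lemma) (rule inT)
    show "\<forall>x. (\<lambda>(t,x). restrict (\<lambda>v. if v \<in> U then (1-t) * x v + t else 1) V) (0, x) = incl_base U V x"
      by (auto simp: incl_base_def)
    show "\<forall>x. (\<lambda>(t,x). restrict (\<lambda>v. if v \<in> U then (1-t) * x v + t else 1) V) (1, x) = (\<lambda>_. c) x"
      by (auto simp: c_def)
    show "\<forall>t\<in>{0..1}. (\<lambda>_. True) (\<lambda>x. (\<lambda>(t,x). restrict (\<lambda>v. if v \<in> U then (1-t) * x v + t else 1) V) (t, x))" by simp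
  qed
  then show ?thesis
    unfolding null_homotopic_def S_def T_def by (rule exI[where x=c])
  qed
  show ?thesis unfolding Let_def by (rule key) (rule refl)+
qed

end
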